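(* Let $\alpha,\beta,\gamma$ be partitions with $\alpha_1\le 2$ and let $\Gamma$ be an LR-tableau of type $(\alpha,\beta,\gamma)$; let $x$ be the number of entries $1$ in $\Gamma$. Assume: (1) the number of entries $2$ in $\Gamma$ equals $x$ or $x-1$; (2) every row of $\Gamma$ contains at most one (non-empty) box; (3) if row $j$ contains an entry $2$ and row $i$ contains an entry $1$, then $j>i$. Then there is a bijection between $\mathcal D_\Gamma$ and the set $S_x$ of permutations of $x$ elements.
   Context: For a partition $\lambda$, $\lambda'$ is its conjugate; the diagram of $\lambda$ is drawn with $\lambda'_i$ boxes in row $i$, so the $i$-th row of $\beta\setminus\gamma$ consists of the boxes in columns $\gamma'_i+1,\dots,\beta'_i$. With $\alpha_1\le2$, $\alpha'=(\alpha'_1,\alpha'_2)$. An LR-tableau of type $(\alpha,\beta,\gamma)$ is a filling of $\beta\setminus\gamma$ with $\alpha'_1$ entries $1$ and $\alpha'_2$ entries $2$, weakly increasing along rows, strictly increasing down columns, such that for each $c\ge0$ the number of entries $1$ in columns to the right of column $c$ is at least the number of entries $2$ there. An arc is a pair $(m,n)$, $m>n$ positive integers (source $m$, target $n$); a pole at $n$ is regarded as an arc $(\infty,n)$. An arc diagram of type $(\alpha,\beta,\gamma)$ is a finite multiset of $\alpha'_2$ arcs and $\alpha'_1-\alpha'_2$ poles with, for each $i$, exactly $\beta'_i-\gamma'_i$ members having source or target $i$. It has LR type $\Gamma$ if for each $i$ the number of arcs with source $i$ equals the number of entries $2$ in row $i$ of $\Gamma$; $\mathcal D_\Gamma$ is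 the set of arc diagrams of type $(\alpha,\beta,\gamma)$ of LR type $\Gamma$. *)

theory Defs
  imports Main "HOL-Library.Multiset" "HOL-Library.Extended_Nat" "HOL-Combinatorics.Permutations"
begin

text \<open>Partitions are lists of positive parts in weakly decreasing order.
  The parts are indexed from 1.\<close>

definition partition :: "nat list \<Rightarrow> bool" where
  "partition xs \<longleftrightarrow> sorted_wrt (\<ge>) xs \<and> 0 \<notin> set xs"

definition part :: "nat list \<Rightarrow> nat \<Rightarrow> nat" where
  "part xs j = (if 1 \<le> j \<and> j \<le> length xs then xs ! (j - 1) else 0)"

definition conj :: "nat list \<Rightarrow> nat \<Rightarrow> nat" where
  "conj xs i = (if i = 0 then 0 else length (filter (\<lambda>a. i \<le> a) xs))"

text \<open>Boxes of the skew diagram beta minus gamma: row i has the boxes in columns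
  conj gamma i + 1, ..., conj beta i.  A box is a pair (row, column).\<close>

definition skew_boxes :: "nat list \<Rightarrow> nat list \<Rightarrow> (nat \<times> nat) set" where
  "skew_boxes \<beta> \<gamma> = {(i, c). 1 \<le> i \<and> conj \<gamma> i < c \<and> c \<le> conj \<beta> i}"

definition LR_tableau ::
  "nat list \<Rightarrow> nat list \<Rightarrow> nat list \<Rightarrow> (nat \<times> nat \<Rightarrow> nat) \<Rightarrow> bool" where
  "LR_tableau \<alpha> \<beta> \<gamma> T \<longleftrightarrow>
     (\<forall>i. conj \<gamma> i \<le> conj \<beta> i) \<and>
     (\<forall>b. b \<notin> skew_boxes \<beta> \<gamma> \<longrightarrow> T b = 0) \<and>
     (\<forall>b \<in> skew_boxes \<beta> \<gamma>. T b \<in> {1, 2}) \<and>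
     card {b \<in> skew_boxes \<beta> \<gamma>. T b = 1} = conj \<alpha> 1 \<and>
     card {b \<in> skew_boxes \<beta> \<gamma>. T b = 2} = conj \<alpha> 2 \<and>
     (\<forall>i c c'. (i, c) \<in> skew_boxes \<beta> \<gamma> \<and> (i, c') \<in> skew_boxes \<beta> \<gamma> \<and> c < c'
        \<longrightarrow> T (i, c) \<le> T (i, c')) \<and>
     (\<forall>i i' c. (i, c) \<in> skew_boxes \<beta> \<gamma> \<and> (i', c) \<in> skew_boxes \<beta> \<gamma> \<and> i < i'
        \<longrightarrow> T (i, c) < T (i', c)) \<and>
     (\<forall>c. card {b \<in> skew_boxes \<beta> \<gamma>. c < snd b \<and> T b = 2}
          \<le> card {b \<in> skew_boxes \<beta> \<gamma>. c < snd b \<and> T b = 1})"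

text \<open>Arcs are pairs (source, target) with source > target \<ge> 1; a pole at n is the
  pair (\<infinity>, n).\<close>

definition arc_diagram ::
  "nat list \<Rightarrow> nat list \<Rightarrow> nat list \<Rightarrow> (enat \<times> nat) multiset \<Rightarrow> bool" where
  "arc_diagram \<alpha> \<beta> \<gamma> D \<longleftrightarrow>
     (\<forall>a \<in># D. 1 \<le> snd a \<and> enat (snd a) < fst a) \<and>
     size (filter_mset (\<lambda>a. fst a \<noteq> \<infinity>) D) = conj \<alpha> 2 \<and>
     size (filter_mset (\<lambda>a. fst a = \<infinity>) D) = conj \<alpha> 1 - conj \<alpha> 2 \<and>
     (\<forall>i \<ge> 1. size (filter_mset (\<lambda>a. fst a = enat i \<or> snd a = i) D)
                = conj \<beta> i - conj \<gamma> i)"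

definition has_LR_type ::
  "nat list \<Rightarrow> nat list \<Rightarrow> (nat \<times> nat \<Rightarrow> nat) \<Rightarrow> (enat \<times> nat) multiset \<Rightarrow> bool" where
  "has_LR_type \<beta> \<gamma> T D \<longleftrightarrow>
     (\<forall>i \<ge> 1. size (filter_mset (\<lambda>a. fst a = enat i) D)
              = card {c. (i, c) \<in> skew_boxes \<beta> \<gamma> \<and> T (i, c) = 2})"

definition arc_diagrams_of_type ::
  "nat list \<Rightarrow> nat list \<Rightarrow> nat list \<Rightarrow> (nat \<times> nat \<Rightarrow> nat) \<Rightarrow> (enat \<times> nat) multiset set" where
  "arc_diagrams_of_type \<alpha> \<beta> \<gamma> T = {D. arc_diagram \<alpha> \<beta> \<gamma> D \<and> has_LR_type \<beta> \<gamma> T D}"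

end

theory Submission
  imports Defs
begin

lemma size_filter_image_mset_set:
  assumes "finite A"
  shows "size (filter_mset P (image_mset f (mset_set A))) = card {a\<in>A. P (f a)}"
  using assms by (simp add: filter_mset_image_mset filter_mset_mset_set)

lemma card_bij_pred:
  assumes "bij_betw f A B"
  shows "card {a\<in>A. P (f a)} = card {b\<in>B. P b}"
proof -
  have "inj_on f {a\<in>A. P (f a)}" using assms by (auto simp: bij_betw_def intro: inj_on_subset)
  moreover have "f ` {a\<in>A. P (f a)} = {b\<in>B. P b}" using assms by (auto simp: bij_betw_def)
  ultimately show ?thesis by (metis card_image)
qed

lemma filter_mset_disj_split:
  "filter_mset (\<lambda>a. P a \<or> Q a) M = filter_mset P M + filter_mset (\<lambda>a. Q a \<and> \<not> P a) M"
  by (induction M) auto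

lemma filter_mset_in_sum:
  assumes "finite A"
  shows "filter_mset (\<lambda>a. f a \<in> A) M = (\<Sum>r\<in>A. filter_mset (\<lambda>a. f a = r) M)"
  using assms
proof (induction A rule: finite_induct)
  case empty
  then show ?case by simp
next
  case (insert r A)
  have "filter_mset (\<lambda>a. f a \<in> insert r A) M = filter_mset (\<lambda>a. f a = r) M + filter_mset (\<lambda>a. f a \<in> A) M"
    using insert(2) by (intro multiset_eqI) auto
  then show ?case using insert by simp
qed

lemma sum_single_mset:
  assumes "finite A"
  shows "(\<Sum>r\<in>A. {#f r#}) = image_mset f (mset_set A)"
  using assms by (induction A rule: finite_induct) auto

definition goodD :: "nat set \<Rightarrow> nat set \<Rightarrow> nat \<Rightarrow> nat \<Rightarrow> (enat \<times> nat) multiset \<Rightarrow> bool" where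
  "goodD R1 R2 x y D \<longleftrightarrow> (\<forall>a\<in>#D. 1 \<le> snd a \<and> enat (snd a) < fst a) \<and>
     size (filter_mset (\<lambda>a. fst a \<noteq> \<infinity>) D) = y \<and>
     size (filter_mset (\<lambda>a. fst a = \<infinity>) D) = x - y \<and>
     (\<forall>i \<ge> 1. size (filter_mset (\<lambda>a. fst a = enat i \<or> snd a = i) D) = (if i \<in> R1 \<union> R2 then 1 else 0)) \<and>
     (\<forall>i \<ge> 1. size (filter_mset (\<lambda>a. fst a = enat i) D) = (if i \<in> R2 then 1 else 0))"

lemma core:
  fixes R1 R2 :: "nat set" and x y :: nat
  assumes fin1: "finite R1" and fin2: "finite R2" and c1: "card R1 = x" and c2: "card R2 = y"
    and xy: "y = x \<or> y + 1 = x" and lt: "\<forall>r\<in>R1. \<forall>s\<in>R2. r < s" and pos: "\<forall>r\<in>R1. 1 \<le> r"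
  shows "\<exists>f. bij_betw f {D. goodD R1 R2 x y D} {p. p permutes {1..x}}"
proof -
  define Tgt where "Tgt = enat ` R2 \<union> (if y < x then {\<infinity>} else {})"
  have finT: "finite Tgt" using fin2 by (simp add: Tgt_def)
  have cR2: "card (enat ` R2) = y" using c2 by (simp add: card_image inj_on_def)
  have cT: "card Tgt = x"
  proof (cases "y < x")
    case True
    then have "Tgt = insert \<infinity> (enat ` R2)" by (auto simp: Tgt_def)
    then show ?thesis using True xy cR2 fin2 by (auto simp: card_insert_if)
  next
    case False
    then show ?thesis using xy cR2 by (auto simp: Tgt_def)
  qed
  obtain h where h: "bij_betw h {1..x} R1" using ex_bij_betw_nat_finite_1[OF fin1] c1 by auto
  obtain k where k: "bij_betw k {1..x} Tgt" using ex_bij_betw_nat_finite_1[OF finT] cT by auto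
  have disj: "R1 \<inter> R2 = {}" using lt by auto
  define \<phi> where "\<phi> p = image_mset (\<lambda>j. (k (p j), h j)) (mset_set {1..x})" for p :: "nat \<Rightarrow> nat"
  have into: "goodD R1 R2 x y (\<phi> p)" if p: "p permutes {1..x}" for p
  proof -
    have kp: "bij_betw (k \<circ> p) {1..x} Tgt" using permutes_imp_bij[OF p] k by (rule bij_betw_trans)
    have cnt: "size (filter_mset P (\<phi> p)) = card {j\<in>{1..x}. P (k (p j), h j)}" for P
      unfolding \<phi>_def by (simp add: size_filter_image_mset_set)
    have kpT: "\<And>P. card {j\<in>{1..x}. P (k (p j))} = card {t\<in>Tgt. P t}"
      using card_bij_pred[OF kp] by simp
    have hR: "\<And>P. card {j\<in>{1..x}. P (h j)} = card {t\<in>R1. P t}"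
      using card_bij_pred[OF h] by simp
    have A: "\<forall>a\<in>#\<phi> p. 1 \<le> snd a \<and> enat (snd a) < fst a"
    proof
      fix a assume "a \<in># \<phi> p"
      then obtain j where j: "j \<in> {1..x}" and a: "a = (k (p j), h j)" unfolding \<phi>_def by auto
      have hj: "h j \<in> R1" using h j by (auto simp: bij_betw_def)
      have "p j \<in> {1..x}" using permutes_in_image[OF p] j by blast
      then have "k (p j) \<in> Tgt" using k by (auto simp: bij_betw_def)
      then show "1 \<le> snd a \<and> enat (snd a) < fst a"
        using hj pos lt a by (auto simp: Tgt_def split: if_splits)
    qed
    have B: "size (filter_mset (\<lambda>a. fst a \<noteq> \<infinity>) (\<phi> p)) = y"
    proof -
      have "{t\<in>Tgt. t \<noteq> \<infinity>} = enat ` R2" by (auto simp: Tgt_def)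
      then show ?thesis using cnt kpT[of "\<lambda>t. t \<noteq> \<infinity>"] cR2 by simp
    qed
    have C: "size (filter_mset (\<lambda>a. fst a = \<infinity>) (\<phi> p)) = x - y"
    proof -
      have "{t\<in>Tgt. t = \<infinity>} = (if y < x then {\<infinity>} else {})" by (auto simp: Tgt_def)
      then show ?thesis using cnt kpT[of "\<lambda>t. t = \<infinity>"] xy by auto
    qed
    have D: "size (filter_mset (\<lambda>a. fst a = enat i) (\<phi> p)) = (if i \<in> R2 then 1 else 0)" for i
    proof -
      have "{t\<in>Tgt. t = enat i} = (if i \<in> R2 then {enat i} else {})" by (auto simp: Tgt_def)
      then show ?thesis using cnt kpT[of "\<lambda>t. t = enat i"] by auto
    qed
    have E: "size (filter_mset (\<lambda>a. fst a = enat i \<or> snd a = i) (\<phi> p)) = (if i \<in> R1 \<union> R2 then 1 else 0)" for i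
    proof -
      have "{j\<in>{1..x}. k (p j) = enat i \<or> h j = i} = {j\<in>{1..x}. k (p j) = enat i} \<union> {j\<in>{1..x}. h j = i}" by auto
      moreover have "{j\<in>{1..x}. k (p j) = enat i} \<inter> {j\<in>{1..x}. h j = i} = {}"
      proof -
        { fix j assume j: "j \<in> {1..x}" "k (p j) = enat i" "h j = i"
          have "p j \<in> {1..x}" using permutes_in_image[OF p] j by blast
          then have "k (p j) \<in> Tgt" using k by (auto simp: bij_betw_def)
          then have "i \<in> R2" using j by (auto simp: Tgt_def split: if_splits)
          moreover have "i \<in> R1" using h j by (auto simp: bij_betw_def)
          ultimately have False using disj by auto }
        then show ?thesis by auto
      qed
      ultimately have "card {j\<in>{1..x}. k (p j) = enat i \<or> h j = i} = card {j\<in>{1..x}. k (p j) = enat i} + card {j\<in>{1..x}. h j = i}"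
        by (simp add: card_Un_disjoint)
      moreover have "card {j\<in>{1..x}. k (p j) = enat i} = (if i \<in> R2 then 1 else 0)"
      proof -
        have "{t\<in>Tgt. t = enat i} = (if i \<in> R2 then {enat i} else {})" by (auto simp: Tgt_def)
        then show ?thesis using kpT[of "\<lambda>t. t = enat i"] by auto
      qed
      moreover have "card {j\<in>{1..x}. h j = i} = (if i \<in> R1 then 1 else 0)"
      proof -
        have "{t\<in>R1. t = i} = (if i \<in> R1 then {i} else {})" by auto
        then show ?thesis using hR[of "\<lambda>t. t = i"] by auto
      qed
      ultimately show ?thesis using cnt[of "\<lambda>a. fst a = enat i \<or> snd a = i"] disj by auto
    qed
    show ?thesis unfolding goodD_def using A B C D E by auto
  qed
  have inj: "inj_on \<phi> {p. p permutes {1..x}}"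
  proof (rule inj_onI)
    fix p q assume p: "p \<in> {p. p permutes {1..x}}" and q: "q \<in> {p. p permutes {1..x}}" and eq: "\<phi> p = \<phi> q"
    have single: "filter_mset (\<lambda>a. snd a = h j) (\<phi> r) = {#(k (r j), h j)#}" if j: "j \<in> {1..x}" for r j
    proof -
      have ih: "inj_on h {1..x}" using h by (simp add: bij_betw_def)
      have "{j'\<in>{1..x}. h j' = h j} = {j}" using inj_onD[OF ih] j by blast
      then show ?thesis unfolding \<phi>_def by (simp add: filter_mset_image_mset filter_mset_mset_set)
    qed
    show "p = q"
    proof
      fix j show "p j = q j"
      proof (cases "j \<in> {1..x}")
        case True
        have "{#(k (p j), h j)#} = {#(k (q j), h j)#}" using single[OF True, of p] single[OF True, of q] eq by metis
        then have "k (p j) = k (q j)" by simp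
        moreover have "p j \<in> {1..x}" "q j \<in> {1..x}"
          using permutes_in_image[of p "{1..x}" j] permutes_in_image[of q "{1..x}" j] p q True by auto
        moreover have "inj_on k {1..x}" using k by (simp add: bij_betw_def)
        ultimately show ?thesis using inj_onD by metis
      next
        case False
        then show ?thesis using p q by (auto simp: permutes_not_in)
      qed
    qed
  qed
  have surj: "D \<in> \<phi> ` {p. p permutes {1..x}}" if G: "goodD R1 R2 x y D" for D
  proof -
    note G' = G[unfolded goodD_def]
    have pos_a: "\<And>a. a \<in># D \<Longrightarrow> 1 \<le> snd a \<and> enat (snd a) < fst a" using G' by auto
    have rowc: "\<And>i. 1 \<le> i \<Longrightarrow> size (filter_mset (\<lambda>a. fst a = enat i \<or> snd a = i) D) = (if i \<in> R1 \<union> R2 then 1 else 0)"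
      using G' by auto
    have srcc: "\<And>i. 1 \<le> i \<Longrightarrow> size (filter_mset (\<lambda>a. fst a = enat i) D) = (if i \<in> R2 then 1 else 0)"
      using G' by auto
    have sndR1: "snd a \<in> R1" if a: "a \<in># D" for a
    proof -
      let ?i = "snd a"
      have i1: "1 \<le> ?i" using pos_a[OF a] by simp
      have "a \<in># filter_mset (\<lambda>b. fst b = enat ?i \<or> snd b = ?i) D" using a by simp
      then have "size (filter_mset (\<lambda>b. fst b = enat ?i \<or> snd b = ?i) D) \<noteq> 0" by (metis size_eq_0_iff_empty empty_iff set_mset_empty)
      then have iin: "?i \<in> R1 \<union> R2" using rowc[OF i1] by (auto split: if_splits)
      show ?thesis
      proof (rule ccontr)
        assume "?i \<notin> R1"
        then have iR2: "?i \<in> R2" using iin by auto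
        have sp: "size (filter_mset (\<lambda>b. fst b = enat ?i \<or> snd b = ?i) D) =
          size (filter_mset (\<lambda>b. fst b = enat ?i) D) + size (filter_mset (\<lambda>b. snd b = ?i \<and> fst b \<noteq> enat ?i) D)"
          by (simp add: filter_mset_disj_split)
        have "a \<in># filter_mset (\<lambda>b. snd b = ?i \<and> fst b \<noteq> enat ?i) D" using a pos_a[OF a] by auto
        then have "size (filter_mset (\<lambda>b. snd b = ?i \<and> fst b \<noteq> enat ?i) D) \<noteq> 0" by (metis size_eq_0_iff_empty empty_iff set_mset_empty)
        then show False using sp rowc[OF i1] srcc[OF i1] iR2 by auto
      qed
    qed
    have fstT: "fst a \<in> enat ` R2" if a: "a \<in># D" "fst a \<noteq> \<infinity>" for a
    proof -
      obtain s where s: "fst a = enat s" using a(2) by (cases "fst a") auto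
      have s1: "1 \<le> s" using pos_a[OF a(1)] s by auto
      have "a \<in># filter_mset (\<lambda>b. fst b = enat s) D" using a s by simp
      then have "size (filter_mset (\<lambda>b. fst b = enat s) D) \<noteq> 0" by (metis size_eq_0_iff_empty empty_iff set_mset_empty)
      then have "s \<in> R2" using srcc[OF s1] by (auto split: if_splits)
      then show ?thesis using s by auto
    qed
    have one: "size (filter_mset (\<lambda>a. snd a = r) D) = 1" if r: "r \<in> R1" for r
    proof -
      have r1: "1 \<le> r" using pos r by auto
      have rn: "r \<notin> R2" using r disj by auto
      have "(\<lambda>a. fst a = enat r \<or> snd a = r) = (\<lambda>a. snd a = r \<or> fst a = enat r)" by auto
      then have sp: "size (filter_mset (\<lambda>b. fst b = enat r \<or> snd b = r) D) =
          size (filter_mset (\<lambda>b. snd b = r) D) + size (filter_mset (\<lambda>b. fst b = enat r \<and> snd b \<noteq> r) D)"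
        by (simp add: filter_mset_disj_split)
      have "filter_mset (\<lambda>b. fst b = enat r \<and> snd b \<noteq> r) D \<subseteq># filter_mset (\<lambda>b. fst b = enat r) D"
      proof -
        have "filter_mset (\<lambda>b. fst b = enat r \<and> snd b \<noteq> r) D = filter_mset (\<lambda>b. snd b \<noteq> r) (filter_mset (\<lambda>b. fst b = enat r) D)"
          by (simp add: filter_filter_mset)
        then show ?thesis by (metis multiset_filter_subset)
      qed
      then have "size (filter_mset (\<lambda>b. fst b = enat r \<and> snd b \<noteq> r) D) \<le> size (filter_mset (\<lambda>b. fst b = enat r) D)"
        by (rule size_mset_mono)
      then show ?thesis using sp rowc[OF r1] srcc[OF r1] rn r by auto
    qed
    define g where "g r = (SOME t. filter_mset (\<lambda>a. snd a = r) D = {#(t, r)#})" for r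
    have gD: "filter_mset (\<lambda>a. snd a = r) D = {#(g r, r)#}" if r: "r \<in> R1" for r
    proof -
      obtain a where a: "filter_mset (\<lambda>a. snd a = r) D = {#a#}" using size_1_singleton_mset[OF one[OF r]] by auto
      have "a \<in># filter_mset (\<lambda>a. snd a = r) D" using a by simp
      then have "snd a = r" by simp
      then have "filter_mset (\<lambda>a. snd a = r) D = {#(fst a, r)#}" using a by (cases a) auto
      then have "\<exists>t. filter_mset (\<lambda>a. snd a = r) D = {#(t, r)#}" by blast
      then show ?thesis unfolding g_def by (rule someI_ex)
    qed
    have Deq: "D = image_mset (\<lambda>r. (g r, r)) (mset_set R1)"
    proof -
      have "D = filter_mset (\<lambda>a. snd a \<in> R1) D" using sndR1 by (intro multiset_eqI) (metis count_filter_mset count_eq_zero_iff)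
      also have "\<dots> = (\<Sum>r\<in>R1. filter_mset (\<lambda>a. snd a = r) D)" by (rule filter_mset_in_sum[OF fin1])
      also have "\<dots> = (\<Sum>r\<in>R1. {#(g r, r)#})" using gD by simp
      also have "\<dots> = image_mset (\<lambda>r. (g r, r)) (mset_set R1)" by (rule sum_single_mset[OF fin1])
      finally show ?thesis .
    qed
    have cntD: "size (filter_mset P D) = card {r\<in>R1. P (g r, r)}" for P
      by (subst Deq) (simp add: size_filter_image_mset_set[OF fin1])
    have gs: "card {r\<in>R1. g r = enat s} = 1" if s: "s \<in> R2" for s
    proof -
      have "R1 \<noteq> {}"
      proof
        assume "R1 = {}"
        then have "x = 0" using c1 by simp
        then have "y = 0" using xy by auto
        then have "R2 = {}" using c2 fin2 by simp
        then show False using s by simp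
      qed
      then obtain r where "r \<in> R1" by auto
      then have "1 \<le> s" using s lt pos by force
      then show ?thesis using srcc[of s] cntD[of "\<lambda>a. fst a = enat s"] s by simp
    qed
    have ginf: "card {r\<in>R1. g r = \<infinity>} = x - y"
      using G' cntD[of "\<lambda>a. fst a = \<infinity>"] by simp
    have gin: "(g r, r) \<in># D" if "r \<in> R1" for r 
    proof -
      have "(g r, r) \<in># filter_mset (\<lambda>a. snd a = r) D" using gD[OF that] by simp
      then show ?thesis by simp
    qed
    have sub1: "g ` R1 \<subseteq> Tgt"
    proof
      fix t assume "t \<in> g ` R1"
      then obtain r where r: "r \<in> R1" "t = g r" by auto
      show "t \<in> Tgt"
      proof (cases "g r = \<infinity>")
        case True
        then have "r \<in> {r\<in>R1. g r = \<infinity>}" using r by auto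
        then have "card {r\<in>R1. g r = \<infinity>} \<noteq> 0" using fin1 by auto
        then have "y < x" using ginf by simp
        then show ?thesis using True r by (simp add: Tgt_def)
      next
        case False
        then show ?thesis using fstT[OF gin[OF r(1)]] r by (simp add: Tgt_def)
      qed
    qed
    have sub2: "Tgt \<subseteq> g ` R1"
    proof
      fix t assume t: "t \<in> Tgt"
      show "t \<in> g ` R1"
      proof (cases "t = \<infinity>")
        case True
        then have "y < x" using t by (auto simp: Tgt_def split: if_splits)
        then have "{r\<in>R1. g r = \<infinity>} \<noteq> {}" using ginf by (metis card.empty zero_less_diff less_irrefl_nat)
        then show ?thesis using True by (metis (mono_tags, lifting) empty_Collect_eq image_eqI)
      next
        case False
        then obtain s where s: "s \<in> R2" "t = enat s" using t by (auto simp: Tgt_def split: if_splits)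
        then have "{r\<in>R1. g r = enat s} \<noteq> {}" using gs[OF s(1)] by (metis card.empty zero_neq_one)
        then show ?thesis using s by (metis (mono_tags, lifting) empty_Collect_eq image_eqI)
      qed
    qed
    have gimg: "g ` R1 = Tgt" using sub1 sub2 by auto
    have gbij: "bij_betw g R1 Tgt"
      unfolding bij_betw_def using gimg eq_card_imp_inj_on[OF fin1, of g] cT c1 by simp
    define p where "p j = (if j \<in> {1..x} then inv_into {1..x} k (g (h j)) else j)" for j
    have cb: "bij_betw (inv_into {1..x} k \<circ> (g \<circ> h)) {1..x} {1..x}"
      using bij_betw_trans[OF bij_betw_trans[OF h gbij] bij_betw_inv_into[OF k]] by (simp add: comp_assoc)
    have "bij_betw p {1..x} {1..x}"
    proof -
      have "\<And>j. j \<in> {1..x} \<Longrightarrow> p j = (inv_into {1..x} k \<circ> (g \<circ> h)) j" by (simp add: p_def)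
      then show ?thesis using cb bij_betw_cong by blast
    qed
    then have pp: "p permutes {1..x}" by (rule bij_imp_permutes) (auto simp: p_def)
    have kp: "k (p j) = g (h j)" if j: "j \<in> {1..x}" for j
    proof -
      have "g (h j) \<in> Tgt" using gbij h j by (auto simp: bij_betw_def)
      then have "g (h j) \<in> k ` {1..x}" using k by (simp add: bij_betw_def)
      then show ?thesis using j by (simp add: p_def f_inv_into_f)
    qed
    have "\<phi> p = image_mset (\<lambda>j. (g (h j), h j)) (mset_set {1..x})"
      unfolding \<phi>_def using kp by (intro image_mset_cong) simp
    also have "\<dots> = image_mset (\<lambda>r. (g r, r)) (image_mset h (mset_set {1..x}))" by (simp add: image_mset.compositionality o_def)
    also have "\<dots> = image_mset (\<lambda>r. (g r, r)) (mset_set R1)"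
      using h by (simp add: image_mset_mset_set bij_betw_def)
    finally have "\<phi> p = D" using Deq by simp
    then show ?thesis using pp by auto
  qed
  have "bij_betw \<phi> {p. p permutes {1..x}} {D. goodD R1 R2 x y D}"
    unfolding bij_betw_def using inj into surj by auto
  then show ?thesis using bij_betw_inv_into by blast
qed


lemma card_le1_eq:
  assumes "finite A" "card A \<le> 1" "a \<in> A" "b \<in> A" shows "a = b"
  using assms card_le_Suc0_iff_eq[OF assms(1)] by auto

theorem mainTheorem6:
  fixes \<alpha> \<beta> \<gamma> :: "nat list" and T :: "nat \<times> nat \<Rightarrow> nat" and x :: nat
  assumes "partition \<alpha>" and "partition \<beta>" and "partition \<gamma>"
    and "part \<alpha> 1 \<le> 2"
    and "LR_tableau \<alpha> \<beta> \<gamma> T"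
    and "x = card {b \<in> skew_boxes \<beta> \<gamma>. T b = 1}"
    and "card {b \<in> skew_boxes \<beta> \<gamma>. T b = 2} = x \<or>
         card {b \<in> skew_boxes \<beta> \<gamma>. T b = 2} + 1 = x"
    and "\<forall>i. card {c. (i, c) \<in> skew_boxes \<beta> \<gamma>} \<le> 1"
    and "\<forall>i j c d. (j, c) \<in> skew_boxes \<beta> \<gamma> \<and> T (j, c) = 2 \<and>
                   (i, d) \<in> skew_boxes \<beta> \<gamma> \<and> T (i, d) = 1 \<longrightarrow> i < j"
  shows "\<exists>f. bij_betw f (arc_diagrams_of_type \<alpha> \<beta> \<gamma> T) {p. p permutes {1..x}}"
proof -
  define SB where "SB = skew_boxes \<beta> \<gamma>"
  define y where "y = card {b \<in> SB. T b = 2}"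
  define R1 where "R1 = fst ` {b \<in> SB. T b = 1}"
  define R2 where "R2 = fst ` {b \<in> SB. T b = 2}"
  have LR: "LR_tableau \<alpha> \<beta> \<gamma> T" by fact
  have Tv: "\<And>b. b \<in> SB \<Longrightarrow> T b \<in> {1, 2}" using LR by (simp add: LR_tableau_def SB_def)
  have ca1: "conj \<alpha> 1 = x" using LR assms(6) by (simp add: LR_tableau_def SB_def)
  have ca2: "conj \<alpha> 2 = y" using LR by (simp add: LR_tableau_def SB_def y_def)
  have rowset: "{c. (i, c) \<in> SB} = {conj \<gamma> i<..conj \<beta> i}" if "1 \<le> i" for i
    using that by (auto simp: SB_def skew_boxes_def)
  have rowfin: "finite {c. (i, c) \<in> SB}" for i
  proof -
    have "{c. (i, c) \<in> SB} \<subseteq> {..conj \<beta> i}" by (auto simp: SB_def skew_boxes_def)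
    then show ?thesis by (rule finite_subset) simp
  qed
  have row1: "card {c. (i, c) \<in> SB} \<le> 1" for i using assms(8) by (simp add: SB_def)
  have finSB: "finite SB"
  proof -
    have "SB \<subseteq> {..sum_list \<beta>} \<times> {..length \<beta>}"
    proof
      fix b assume b: "b \<in> SB"
      obtain i c where bic: "b = (i, c)" by (cases b)
      have h1: "1 \<le> i" "conj \<gamma> i < c" "c \<le> conj \<beta> i" using b bic by (auto simp: SB_def skew_boxes_def)
      then have "0 < conj \<beta> i" by linarith
      then have "0 < length (filter (\<lambda>a. i \<le> a) \<beta>)" using h1(1) unfolding conj_def by simp
      then obtain a where a: "a \<in> set \<beta>" "i \<le> a" by (metis (mono_tags, lifting) filter_False length_greater_0_conv)
      have "a \<le> sum_list \<beta>" using a(1) by (simp add: member_le_sum_list)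
      moreover have "conj \<beta> i \<le> length \<beta>" by (simp add: conj_def)
      ultimately show "b \<in> {..sum_list \<beta>} \<times> {..length \<beta>}" using a h1 bic by auto
    qed
    then show ?thesis by (rule finite_subset) simp
  qed
  have injfst: "inj_on fst SB"
  proof (rule inj_onI)
    fix a b assume a: "a \<in> SB" and b: "b \<in> SB" and e: "fst a = fst b"
    obtain i c where ai: "a = (i, c)" by (cases a)
    obtain c' where bi: "b = (i, c')" using e ai by (cases b) auto
    have "c = c'" using card_le1_eq[OF rowfin[of i] row1[of i], of c c'] a b ai bi by auto
    then show "a = b" using ai bi by simp
  qed
  have c1: "card R1 = x" unfolding R1_def using assms(6) injfst
    by (simp add: SB_def card_image inj_on_subset)
  have c2: "card R2 = y" unfolding R2_def y_def using injfst
    by (simp add: card_image inj_on_subset)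
  have fin1: "finite R1" unfolding R1_def using finSB by simp
  have fin2: "finite R2" unfolding R2_def using finSB by simp
  have xy: "y = x \<or> y + 1 = x" using assms(7) by (simp add: y_def SB_def)
  have lt: "\<forall>r\<in>R1. \<forall>s\<in>R2. r < s" using assms(9) by (force simp: R1_def R2_def SB_def)
  have pos: "\<forall>r\<in>R1. 1 \<le> r" by (auto simp: R1_def SB_def skew_boxes_def)
  have exrow: "(\<exists>c. (i, c) \<in> SB) \<longleftrightarrow> i \<in> R1 \<union> R2" for i
    using Tv by (force simp: R1_def R2_def)
  have rowfact: "conj \<beta> i - conj \<gamma> i = (if i \<in> R1 \<union> R2 then 1 else 0)" if i: "1 \<le> i" for i
  proof -
    have "conj \<beta> i - conj \<gamma> i = card {c. (i, c) \<in> SB}" using rowset[OF i] by simp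
    moreover have "card {c. (i, c) \<in> SB} = (if i \<in> R1 \<union> R2 then 1 else 0)"
    proof (cases "i \<in> R1 \<union> R2")
      case True
      then obtain c where "(i, c) \<in> SB" using exrow by blast
      then have "card {c. (i, c) \<in> SB} \<noteq> 0" using rowfin[of i] by auto
      then show ?thesis using True row1[of i] by simp
    next
      case False
      then have "{c. (i, c) \<in> SB} = {}" using exrow by blast
      then show ?thesis using False by simp
    qed
    ultimately show ?thesis by simp
  qed
  have twofact: "card {c. (i, c) \<in> SB \<and> T (i, c) = 2} = (if i \<in> R2 then 1 else 0)" for i
  proof -
    have sub: "{c. (i, c) \<in> SB \<and> T (i, c) = 2} \<subseteq> {c. (i, c) \<in> SB}" by auto
    have fin: "finite {c. (i, c) \<in> SB \<and> T (i, c) = 2}" using rowfin[of i] sub by (rule finite_subset[rotated])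
    have le: "card {c. (i, c) \<in> SB \<and> T (i, c) = 2} \<le> 1" using card_mono[OF rowfin sub] row1[of i] by simp
    show ?thesis
    proof (cases "i \<in> R2")
      case True
      then obtain c where "(i, c) \<in> SB" "T (i, c) = 2" by (auto simp: R2_def)
      then have "card {c. (i, c) \<in> SB \<and> T (i, c) = 2} \<noteq> 0" using fin by auto
      then show ?thesis using True le by simp
    next
      case False
      then have "{c. (i, c) \<in> SB \<and> T (i, c) = 2} = {}" by (force simp: R2_def)
      then show ?thesis using False by (metis card.empty)
    qed
  qed
  have eq: "arc_diagrams_of_type \<alpha> \<beta> \<gamma> T = {D. goodD R1 R2 x y D}"
    unfolding arc_diagrams_of_type_def arc_diagram_def has_LR_type_def goodD_def
    using rowfact twofact[unfolded SB_def] ca1 ca2 by (simp add: SB_def)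
  show ?thesis unfolding eq by (rule core[OF fin1 fin2 c1 c2 xy lt pos])
qed

end
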